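(* Let $(U,V_1)$ be random variables with joint distribution $p(u,v_1)$, let $p(v)$ denote the marginal of $V_1$, and let $k\ge 2$. Fix a measurable function $f$ with real values defined on pairs $(u,v)$, and for each $u$ put $c(u)=\mathbf{E}_{v\sim p(v)}[e^{f(u,v)}]$, assumed finite. For each $u$ choose a Borel set $B_u\subset\mathbf{R}$ strictly lower-bounded by $c(u)$, i.e. $b>c(u)$ for every $b\in B_u$, and set $S_{B_u}=\{v : e^{f(u,v)}\in B_u\}$, assumed to satisfy $p(S_{B_u})>0$. Define the conditional distribution $q(\cdot\mid u)$ of $V_{2:k}=(V_2,\dots,V_k)$ on Borel rectangles $A=A_2\times\cdots\times A_k$ by $$q(V_{2:k}\in A\mid u)=\prod_{j=2}^k p(A_j\mid S_{B_u}),\qquad p(A_j\mid S_{B_u})=\frac{p(A_j\cap S_{B_u})}{p(S_{B_u})},$$ (so $V_2,\dots,V_k$ are i.i.d. from the marginal $p(v)$ conditioned on $S_{B_u}$). Define $$\mathcal{L}_{\mathrm{CNCE}}(U;V_1)=\mathbf{E}_{(u,v_1)\sim p(u,v_1)}\,\mathbf{E}_{v_{2:k}\sim q(\cdot\mid u)}\left[\log\frac{e^{f(u,v_1)}}{\frac1k\sum_{j=1}^k e^{f(u,v_j)}}\right]$$ and $$\mathcal{L}_{\mathrm{NCE}}(U;V_1)=\mathbf{E}_{(u,v_1)\sim p(u,v_1)}\,\mathbf{E}_{v_2,\dots,v_k\overset{\text{i.i.d.}}{\sim} p(v)}\left[\log\frac{e^{f(u,v_1)}}{\frac1k\sum_{j=1}^k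 e^{f(u,v_j)}}\right],$$ assuming all expectations are well defined. Then $$\mathcal{L}_{\mathrm{CNCE}}(U;V_1)\le \mathcal{L}_{\mathrm{NCE}}(U;V_1)\le \mathcal{I}(U;V_1),$$ where $\mathcal{I}(U;V_1)$ is the mutual information between $U$ and $V_1$.
   Context: $\mathcal{L}_{\mathrm{NCE}}$ is the noise-contrastive estimation (InfoNCE) objective, in which the "negative examples" $v_2,\dots,v_k$ are drawn i.i.d. from the marginal of $V_1$, independently of $(u,v_1)$; $\mathcal{L}_{\mathrm{CNCE}}$ (conditional NCE) is the same objective with negatives drawn from the restricted, renormalized marginal $q$. *)

theory Defs
  imports "HOL-Probability.Probability"
begin

definition marg_V :: "('a \<times> 'b) measure \<Rightarrow> 'b measure \<Rightarrow> 'b measure" where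
  "marg_V P MV = distr P MV snd"

definition nce_score :: "nat \<Rightarrow> ('a \<times> 'b \<Rightarrow> real) \<Rightarrow> 'a \<Rightarrow> 'b \<Rightarrow> (nat \<Rightarrow> 'b) \<Rightarrow> real" where
  "nce_score k f u v1 vs =
     ln (exp (f (u, v1)) / ((1 / real k) * (exp (f (u, v1)) + (\<Sum>j\<in>{2..k}. exp (f (u, vs j))))))"

definition L_NCE :: "('a \<times> 'b) measure \<Rightarrow> 'b measure \<Rightarrow> nat \<Rightarrow> ('a \<times> 'b \<Rightarrow> real) \<Rightarrow> real" where
  "L_NCE P MV k f =
     (\<integral>x. (\<integral>vs. nce_score k f (fst x) (snd x) vs \<partial>(PiM {2..k} (\<lambda>_. marg_V P MV))) \<partial>P)"

text \<open>Conditional negative law q(.|u): V_2..V_k i.i.d. from the marginal conditioned on S u.\<close>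
definition q_neg :: "('a \<times> 'b) measure \<Rightarrow> 'b measure \<Rightarrow> nat \<Rightarrow> ('a \<Rightarrow> 'b set) \<Rightarrow> 'a \<Rightarrow> (nat \<Rightarrow> 'b) measure" where
  "q_neg P MV k S u = PiM {2..k} (\<lambda>_. uniform_measure (marg_V P MV) (S u))"

definition L_CNCE :: "('a \<times> 'b) measure \<Rightarrow> 'b measure \<Rightarrow> nat \<Rightarrow> ('a \<times> 'b \<Rightarrow> real) \<Rightarrow> ('a \<Rightarrow> 'b set) \<Rightarrow> real" where
  "L_CNCE P MV k f S =
     (\<integral>x. (\<integral>vs. nce_score k f (fst x) (snd x) vs \<partial>(q_neg P MV k S (fst x))) \<partial>P)"

text \<open>Mutual information I(U;V1) (natural log) as an extended real: the KL divergence of the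
  joint law from the product of marginals, which is +\<infinity> if the joint law is not absolutely
  continuous w.r.t. the product, or if the log-density is not integrable (its negative part is
  always integrable, so non-integrability means the integral is +\<infinity>).\<close>
definition mutual_info :: "'a measure \<Rightarrow> 'b measure \<Rightarrow> ('a \<times> 'b) measure \<Rightarrow> ereal" where
  "mutual_info MU MV P =
    (let Q = distr P MU fst \<Otimes>\<^sub>M distr P MV snd;
         J = distr P (MU \<Otimes>\<^sub>M MV) (\<lambda>x. (fst x, snd x))
     in if absolutely_continuous Q J \<and> integrable J (entropy_density (exp 1) Q J)
        then ereal (prob_space.mutual_information P (exp 1) MU MV fst snd)
        else \<infinity>)"

end

theory Submission imports Defs begin


lemma nce_alt:
  assumes k: "k \<ge> 2"
  shows "nce_score k f u v1 vs = ln (real k) + f (u, v1) - ln (exp (f (u, v1)) + (\<Sum>j\<in>{2..k}. exp (f (u, vs j))))"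
proof -
  let ?X = "exp (f (u, v1)) + (\<Sum>j\<in>{2..k}. exp (f (u, vs j)))"
  have X: "?X > 0" by (intro add_pos_nonneg) (auto intro: sum_nonneg)
  have "exp (f (u, v1)) / ((1 / real k) * ?X) = exp (f (u, v1)) * real k / ?X" using k X by (simp add: field_simps)
  then have "nce_score k f u v1 vs = ln (exp (f (u, v1)) * real k / ?X)" by (simp add: nce_score_def)
  also have "\<dots> = f (u, v1) + ln (real k) - ln ?X" using k X by (simp add: ln_div ln_mult)
  finally show ?thesis by simp
qed

lemma nce_Y:
  assumes k: "k \<ge> 2"
  shows "nce_score k f u v1 vs = ln (real k * exp (f (u, v1)) / (exp (f (u, v1)) + (\<Sum>j\<in>{2..k}. exp (f (u, vs j)))))"
proof -
  let ?X = "exp (f (u, v1)) + (\<Sum>j\<in>{2..k}. exp (f (u, vs j)))"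
  have X: "?X > 0" by (intro add_pos_nonneg) (auto intro: sum_nonneg)
  have "exp (f (u, v1)) / ((1 / real k) * ?X) = real k * exp (f (u, v1)) / ?X" using k X by (simp add: field_simps)
  then show ?thesis by (simp add: nce_score_def mult.commute)
qed

lemma part1_point:
  fixes \<mu> :: "'b measure" and e :: "'b \<Rightarrow> real" and k :: nat
  assumes mu: "prob_space \<mu>" and e[measurable]: "e \<in> borel_measurable \<mu>" and epos: "\<And>x. e x > 0"
    and eint: "integrable \<mu> e"
    and k: "k \<ge> 2" and E: "E > 0"
    and S: "S \<in> sets \<mu>" and Spos: "measure \<mu> S > 0"
    and Sbig: "\<And>v. v \<in> S \<Longrightarrow> e v > (\<integral>v. e v \<partial>\<mu>)"
    and int1: "integrable (PiM {2..k} (\<lambda>_. uniform_measure \<mu> S)) (\<lambda>vs. C - ln (E + (\<Sum>j\<in>{2..k}. e (vs j))))"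
    and int2: "integrable (PiM {2..k} (\<lambda>_. \<mu>)) (\<lambda>vs. C - ln (E + (\<Sum>j\<in>{2..k}. e (vs j))))"
  shows "(\<integral>vs. C - ln (E + (\<Sum>j\<in>{2..k}. e (vs j))) \<partial>PiM {2..k} (\<lambda>_. uniform_measure \<mu> S))
       \<le> (\<integral>vs. C - ln (E + (\<Sum>j\<in>{2..k}. e (vs j))) \<partial>PiM {2..k} (\<lambda>_. \<mu>))"
proof -
  interpret mu: prob_space \<mu> by fact
  define c where "c = (\<integral>v. e v \<partial>\<mu>)"
  have c0: "c \<ge> 0" unfolding c_def using epos by (intro integral_nonneg_AE) (auto intro: less_imp_le)
  define A where "A = E + real (k - 1) * c"
  have A: "A > 0" unfolding A_def using E c0 by (intro add_pos_nonneg) auto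
  let ?g = "\<lambda>vs. C - ln (E + (\<Sum>j\<in>{2..k}. e (vs j)))"
  let ?q = "PiM {2..k} (\<lambda>_. uniform_measure \<mu> S)"
  let ?\<Pi> = "PiM {2..k} (\<lambda>_. \<mu>)"
  have emS: "emeasure \<mu> S \<noteq> 0" "emeasure \<mu> S < \<infinity>"
    using Spos mu.emeasure_eq_measure by auto
  have pu: "prob_space (uniform_measure \<mu> S)"
    using emS by (intro prob_space_uniform_measure) auto
  interpret q: prob_space ?q using pu by (intro prob_space_PiM) auto
  interpret Pi: prob_space ?\<Pi> using mu by (intro prob_space_PiM) auto
  have card: "card {2..k} = k - 1" using k by simp
  have "AE vs in ?q. \<forall>j\<in>{2..k}. vs j \<in> S"
  proof (rule AE_finite_allI, simp)
    fix j assume j: "j \<in> {2..k}"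
    have "AE v in uniform_measure \<mu> S. v \<in> S"
      using emS by (subst AE_uniform_measure) auto
    then show "AE vs in ?q. vs j \<in> S"
      using j pu by (intro AE_PiM_component) auto
  qed
  then have "AE vs in ?q. ?g vs \<le> C - ln A"
  proof (eventually_elim)
    case (elim vs)
    have "(\<Sum>j\<in>{2..k}. c) \<le> (\<Sum>j\<in>{2..k}. e (vs j))"
      using elim Sbig unfolding c_def by (intro sum_mono) (auto intro: less_imp_le)
    then have "A \<le> E + (\<Sum>j\<in>{2..k}. e (vs j))" unfolding A_def using card by simp
    then show ?case using A by simp
  qed
  then have L: "(\<integral>vs. ?g vs \<partial>?q) \<le> C - ln A"
    using q.integral_le_const[of ?g "C - ln A"] int1 by simp
  have ecomp: "integrable ?\<Pi> (\<lambda>vs. e (vs j))" "(\<integral>vs. e (vs j) \<partial>?\<Pi>) = c" if j: "j \<in> {2..k}" for j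
  proof -
    have D: "distr ?\<Pi> \<mu> (\<lambda>\<omega>. \<omega> j) = \<mu>" using j mu by (intro distr_PiM_component) auto
    have m: "(\<lambda>\<omega>. \<omega> j) \<in> measurable ?\<Pi> \<mu>" using j by (intro measurable_component_singleton) auto
    show "integrable ?\<Pi> (\<lambda>vs. e (vs j))"
      using integrable_distr_eq[OF m e] eint D by simp
    show "(\<integral>vs. e (vs j) \<partial>?\<Pi>) = c"
      using integral_distr[OF m e] D unfolding c_def by simp
  qed
  have Xint: "integrable ?\<Pi> (\<lambda>vs. E + (\<Sum>j\<in>{2..k}. e (vs j)))"
    using ecomp by (intro Bochner_Integration.integrable_add Bochner_Integration.integrable_sum) auto
  have Xintg: "(\<integral>vs. E + (\<Sum>j\<in>{2..k}. e (vs j)) \<partial>?\<Pi>) = A"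
  proof -
    have si: "integrable ?\<Pi> (\<lambda>vs. \<Sum>j\<in>{2..k}. e (vs j))"
      using ecomp by (intro Bochner_Integration.integrable_sum) auto
    have "(\<integral>vs. E + (\<Sum>j\<in>{2..k}. e (vs j)) \<partial>?\<Pi>) = E + (\<integral>vs. (\<Sum>j\<in>{2..k}. e (vs j)) \<partial>?\<Pi>)"
      using si by (subst Bochner_Integration.integral_add) (auto simp: Pi.prob_space)
    also have "(\<integral>vs. (\<Sum>j\<in>{2..k}. e (vs j)) \<partial>?\<Pi>) = (\<Sum>j\<in>{2..k}. (\<integral>vs. e (vs j) \<partial>?\<Pi>))"
      using ecomp by (intro Bochner_Integration.integral_sum) auto
    also have "\<dots> = (\<Sum>j\<in>{2..k}. c)" using ecomp by (intro sum.cong) auto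
    finally show ?thesis using card by (simp add: A_def)
  qed
  have pt: "C - ln A - (E + (\<Sum>j\<in>{2..k}. e (vs j))) / A + 1 \<le> ?g vs" for vs
  proof -
    let ?X = "E + (\<Sum>j\<in>{2..k}. e (vs j))"
    have X: "?X > 0" using E epos by (intro add_pos_nonneg) (auto intro: sum_nonneg less_imp_le)
    have "ln (?X / A) \<le> ?X / A - 1" using X A by (intro ln_le_minus_one) auto
    then show ?thesis using X A by (simp add: ln_div)
  qed
  have "(\<integral>vs. C - ln A - (E + (\<Sum>j\<in>{2..k}. e (vs j))) / A + 1 \<partial>?\<Pi>) \<le> (\<integral>vs. ?g vs \<partial>?\<Pi>)"
    using Xint int2 pt by (intro integral_mono) auto
  moreover have "(\<integral>vs. C - ln A - (E + (\<Sum>j\<in>{2..k}. e (vs j))) / A + 1 \<partial>?\<Pi>) = C - ln A"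
    using Xint Xintg A Pi.prob_space by (simp add: Bochner_Integration.integral_add Bochner_Integration.integral_diff)
  ultimately show ?thesis using L by simp
qed



lemma sym_swap:
  fixes \<mu> :: "'b measure" and e :: "'b \<Rightarrow> real"
  assumes mu: "prob_space \<mu>" and e: "e \<in> borel_measurable \<mu>" and epos: "\<And>x. e x > 0"
    and K: "finite (K::nat set)" and i: "i \<in> K" and a: "a \<in> K"
  shows "(\<integral>\<^sup>+w. ennreal (e (w i) / (\<Sum>j\<in>K. e (w j))) \<partial>PiM K (\<lambda>_. \<mu>))
       = (\<integral>\<^sup>+w. ennreal (e (w a) / (\<Sum>j\<in>K. e (w j))) \<partial>PiM K (\<lambda>_. \<mu>))"
proof -
  define t where "t n = (if n = a then i else if n = i then a else n)" for n :: nat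
  have tK: "t \<in> K \<rightarrow> K" using i a by (auto simp: t_def)
  have tinj: "inj_on t K" unfolding inj_on_def t_def by auto
  have tbij: "bij_betw t K K" using tinj tK
    by (metis K bij_betw_def endo_inj_surj image_subset_iff_funcset)
  have D: "distr (PiM K (\<lambda>_. \<mu>)) (PiM K (\<lambda>_. \<mu>)) (\<lambda>\<omega>. \<lambda>n\<in>K. \<omega> (t n)) = PiM K (\<lambda>_. \<mu>)"
    using distr_PiM_reindex[of K "\<lambda>_. \<mu>" t K] mu tK tinj by simp
  have meas: "(\<lambda>\<omega>. \<lambda>n\<in>K. \<omega> (t n)) \<in> measurable (PiM K (\<lambda>_. \<mu>)) (PiM K (\<lambda>_. \<mu>))"
    using tK by (intro measurable_restrict) (auto intro!: measurable_component_singleton)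
  have Fm: "(\<lambda>w. ennreal (e (w a) / (\<Sum>j\<in>K. e (w j)))) \<in> borel_measurable (PiM K (\<lambda>_. \<mu>))"
    using e a by measurable
  have "(\<integral>\<^sup>+w. ennreal (e (w a) / (\<Sum>j\<in>K. e (w j))) \<partial>PiM K (\<lambda>_. \<mu>))
     = (\<integral>\<^sup>+w. ennreal (e (w a) / (\<Sum>j\<in>K. e (w j))) \<partial>distr (PiM K (\<lambda>_. \<mu>)) (PiM K (\<lambda>_. \<mu>)) (\<lambda>\<omega>. \<lambda>n\<in>K. \<omega> (t n)))"
    using D by simp
  also have "\<dots> = (\<integral>\<^sup>+\<omega>. ennreal (e (\<omega> (t a)) / (\<Sum>j\<in>K. e (\<omega> (t j)))) \<partial>PiM K (\<lambda>_. \<mu>))"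
    by (subst nn_integral_distr[OF meas]) (use Fm a in simp_all)
  also have "\<dots> = (\<integral>\<^sup>+w. ennreal (e (w i) / (\<Sum>j\<in>K. e (w j))) \<partial>PiM K (\<lambda>_. \<mu>))"
  proof -
    have "(\<Sum>j\<in>K. e (\<omega> (t j))) = (\<Sum>j\<in>K. e (\<omega> j))" for \<omega>
      using sum.reindex_bij_betw[OF tbij, of "\<lambda>j. e (\<omega> j)"] by simp
    moreover have "t a = i" by (simp add: t_def)
    ultimately show ?thesis by simp
  qed
  finally show ?thesis by simp
qed

lemma sym_total:
  fixes \<mu> :: "'b measure" and e :: "'b \<Rightarrow> real" and k :: nat
  assumes mu: "prob_space \<mu>" and e[measurable]: "e \<in> borel_measurable \<mu>" and epos: "\<And>x. e x > 0"
    and k: "k \<ge> 2"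
  shows "(\<integral>\<^sup>+y. \<integral>\<^sup>+x. ennreal (real k * e y / (e y + (\<Sum>j\<in>{2..k}. e (x j)))) \<partial>PiM {2..k} (\<lambda>_. \<mu>) \<partial>\<mu>) = 1"
proof -
  interpret pps: product_prob_space "\<lambda>_::nat. \<mu>" "{}"
    by (simp add: mu product_prob_space_axioms_def product_prob_space_def product_sigma_finite_def prob_space_imp_sigma_finite)
  interpret P: prob_space "PiM {1..k} (\<lambda>_. \<mu>)" using mu by (intro prob_space_PiM) auto
  let ?M = "PiM {1..k} (\<lambda>_. \<mu>)"
  let ?T = "\<lambda>w. (\<Sum>j\<in>{1..k}. e (w j))"
  have Tpos: "?T w > 0" for w using k epos by (intro sum_pos) auto
  have eq: "(\<integral>\<^sup>+w. ennreal (e (w i) / ?T w) \<partial>?M) = (\<integral>\<^sup>+w. ennreal (e (w 1) / ?T w) \<partial>?M)"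
    if "i \<in> {1..k}" for i
    using sym_swap[OF mu e epos, of "{1..k}" i 1] that k by auto
  have "(\<Sum>i\<in>{1..k}. \<integral>\<^sup>+w. ennreal (e (w i) / ?T w) \<partial>?M) = (\<integral>\<^sup>+w. (\<Sum>i\<in>{1..k}. ennreal (e (w i) / ?T w)) \<partial>?M)"
    by (subst nn_integral_sum) auto
  also have "\<dots> = (\<integral>\<^sup>+w. 1 \<partial>?M)"
  proof (rule nn_integral_cong)
    fix w
    have "(\<Sum>i\<in>{1..k}. ennreal (e (w i) / ?T w)) = ennreal (\<Sum>i\<in>{1..k}. e (w i) / ?T w)"
      using Tpos[of w] epos by (subst sum_ennreal) (auto intro: less_imp_le)
    also have "(\<Sum>i\<in>{1..k}. e (w i) / ?T w) = 1"
      using Tpos[of w] by (simp add: sum_divide_distrib[symmetric])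
    finally show "(\<Sum>i\<in>{1..k}. ennreal (e (w i) / ?T w)) = 1" by simp
  qed
  also have "\<dots> = 1" using P.emeasure_space_1 by (simp add: P.emeasure_space_1)
  finally have s1: "(\<Sum>i\<in>{1..k}. \<integral>\<^sup>+w. ennreal (e (w i) / ?T w) \<partial>?M) = 1" .
  have "(\<Sum>i\<in>{1..k}. \<integral>\<^sup>+w. ennreal (e (w i) / ?T w) \<partial>?M) = of_nat k * (\<integral>\<^sup>+w. ennreal (e (w 1) / ?T w) \<partial>?M)"
  proof -
    have "(\<Sum>i\<in>{1..k}. \<integral>\<^sup>+w. ennreal (e (w i) / ?T w) \<partial>?M) = (\<Sum>i\<in>{1..k}. \<integral>\<^sup>+w. ennreal (e (w 1) / ?T w) \<partial>?M)"
      by (rule sum.cong[OF refl eq])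
    then show ?thesis by simp
  qed
  with s1 have s2: "ennreal (real k) * (\<integral>\<^sup>+w. ennreal (e (w 1) / ?T w) \<partial>?M) = 1"
    by (simp add: ennreal_of_nat_eq_real_of_nat)
  have s3: "(\<integral>\<^sup>+w. ennreal (real k * e (w 1) / ?T w) \<partial>?M) = 1"
  proof -
    have "(\<integral>\<^sup>+w. ennreal (real k * e (w 1) / ?T w) \<partial>?M) = (\<integral>\<^sup>+w. ennreal (real k) * ennreal (e (w 1) / ?T w) \<partial>?M)"
      by (intro nn_integral_cong) (simp add: ennreal_mult'[symmetric])
    also have "\<dots> = ennreal (real k) * (\<integral>\<^sup>+w. ennreal (e (w 1) / ?T w) \<partial>?M)"
      using k by (subst nn_integral_cmult) auto
    finally show ?thesis using s2 by simp
  qed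
  have K: "{1..k} = insert 1 {2..k}" using k by auto
  have "(\<integral>\<^sup>+w. ennreal (real k * e (w 1) / ?T w) \<partial>?M)
     = (\<integral>\<^sup>+y. \<integral>\<^sup>+x. ennreal (real k * e ((x(1:=y)) 1) / (\<Sum>j\<in>{1..k}. e ((x(1:=y)) j))) \<partial>PiM {2..k} (\<lambda>_. \<mu>) \<partial>\<mu>)"
    unfolding K by (rule pps.product_nn_integral_insert_rev) (auto simp: K[symmetric])
  also have "\<dots> = (\<integral>\<^sup>+y. \<integral>\<^sup>+x. ennreal (real k * e y / (e y + (\<Sum>j\<in>{2..k}. e (x j)))) \<partial>PiM {2..k} (\<lambda>_. \<mu>) \<partial>\<mu>)"
  proof -
    have "(\<Sum>j\<in>{1..k}. e ((x(1:=y)) j)) = e y + (\<Sum>j\<in>{2..k}. e (x j))" for x y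
      unfolding K by (subst sum.insert) (auto intro!: sum.cong)
    then show ?thesis by simp
  qed
  finally show ?thesis using s3 by simp
qed



lemma part2_point:
  fixes N :: "'c measure" and Y :: "'c \<Rightarrow> real"
  assumes Pi: "prob_space N" and Ym: "Y \<in> borel_measurable N"
    and Ypos: "\<And>vs. Y vs > 0" and Yb: "\<And>vs. Y vs \<le> B"
    and lint: "integrable N (\<lambda>vs. ln (Y vs))" and d: "d > 0"
  shows "integrable N Y" "(\<integral>vs. ln (Y vs) \<partial>N) - ln d \<le> (\<integral>vs. Y vs \<partial>N) / d - 1"
proof -
  interpret prob_space N by fact
  show Yi: "integrable N Y"
    using Ypos Yb Ym by (intro integrable_const_bound[where B=B]) (auto simp: abs_of_pos)
  have pt: "ln (Y vs) - ln d \<le> Y vs / d - 1" for vs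
  proof -
    have "ln (Y vs / d) \<le> Y vs / d - 1" using Ypos[of vs] d by (intro ln_le_minus_one) auto
    then show ?thesis using Ypos[of vs] d by (simp add: ln_div)
  qed
  have "(\<integral>vs. ln (Y vs) - ln d \<partial>N) \<le> (\<integral>vs. Y vs / d - 1 \<partial>N)"
    using lint Yi pt by (intro integral_mono) auto
  then show "(\<integral>vs. ln (Y vs) \<partial>N) - ln d \<le> (\<integral>vs. Y vs \<partial>N) / d - 1"
    using lint Yi by (simp add: Bochner_Integration.integral_diff prob_space)
qed



theorem theorem1:
  fixes P :: "('a \<times> 'b) measure" and MU :: "'a measure" and MV :: "'b measure"
    and k :: nat and f :: "'a \<times> 'b \<Rightarrow> real"
    and B :: "'a \<Rightarrow> real set" and S :: "'a \<Rightarrow> 'b set"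
  assumes P: "prob_space P" and sets_P: "sets P = sets (MU \<Otimes>\<^sub>M MV)"
    and k: "k \<ge> 2"
    and f_meas: "f \<in> borel_measurable (MU \<Otimes>\<^sub>M MV)"
    and c_fin: "\<And>u. u \<in> space MU \<Longrightarrow> integrable (marg_V P MV) (\<lambda>v. exp (f (u, v)))"
    and B_borel: "\<And>u. u \<in> space MU \<Longrightarrow> B u \<in> sets borel"
    and B_lower: "\<And>u b. u \<in> space MU \<Longrightarrow> b \<in> B u \<Longrightarrow>
                    b > (\<integral>v. exp (f (u, v)) \<partial>marg_V P MV)"
    and S_def: "\<And>u. S u = {v \<in> space MV. exp (f (u, v)) \<in> B u}"
    and S_pos: "\<And>u. u \<in> space MU \<Longrightarrow> measure (marg_V P MV) (S u) > 0"
    and int_NCE_inner: "AE x in P. integrable (PiM {2..k} (\<lambda>_. marg_V P MV))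
                                     (nce_score k f (fst x) (snd x))"
    and int_NCE: "integrable P (\<lambda>x. \<integral>vs. nce_score k f (fst x) (snd x) vs
                                     \<partial>(PiM {2..k} (\<lambda>_. marg_V P MV)))"
    and int_CNCE_inner: "AE x in P. integrable (q_neg P MV k S (fst x))
                                     (nce_score k f (fst x) (snd x))"
    and int_CNCE: "integrable P (\<lambda>x. \<integral>vs. nce_score k f (fst x) (snd x) vs
                                     \<partial>(q_neg P MV k S (fst x)))"
  shows "L_CNCE P MV k f S \<le> L_NCE P MV k f
         \<and> ereal (L_NCE P MV k f) \<le> mutual_info MU MV P"
proof -
  interpret P: prob_space P by fact
  have spP: "space P = space MU \<times> space MV"
    using sets_eq_imp_space_eq[OF sets_P] by (simp add: space_pair_measure)
  have f_measP[measurable]: "f \<in> borel_measurable P"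
    by (subst measurable_cong_sets[OF sets_P refl]) (rule f_meas)
  have fst_m[measurable]: "fst \<in> measurable P MU"
    by (subst measurable_cong_sets[OF sets_P refl]) (rule measurable_fst)
  have snd_m[measurable]: "snd \<in> measurable P MV"
    by (subst measurable_cong_sets[OF sets_P refl]) (rule measurable_snd)
  define \<mu> where "\<mu> = marg_V P MV"
  have mu: "prob_space \<mu>" unfolding \<mu>_def marg_V_def by (rule P.prob_space_distr) simp
  interpret mu: prob_space \<mu> by fact
  have sets_mu: "sets \<mu> = sets MV" unfolding \<mu>_def marg_V_def by simp
  have space_mu: "space \<mu> = space MV" unfolding \<mu>_def marg_V_def by simp
  define NN where "NN = PiM {2..k} (\<lambda>_. \<mu>)"
  have NNp: "prob_space NN" unfolding NN_def using mu by (intro prob_space_PiM) auto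
  interpret NN: prob_space NN by fact
  have fu_MV: "(\<lambda>v. f (u, v)) \<in> borel_measurable MV" if "u \<in> space MU" for u
    using measurable_Pair2[OF f_meas that] .
  have e_m: "(\<lambda>v. exp (f (u, v))) \<in> borel_measurable \<mu>" if "u \<in> space MU" for u
    using fu_MV[OF that] by (subst measurable_cong_sets[OF sets_mu refl]) simp
  have S_sets: "S u \<in> sets \<mu>" if u: "u \<in> space MU" for u
  proof -
    have "(\<lambda>v. exp (f (u, v))) -` B u \<inter> space MV \<in> sets MV"
      using measurable_sets[OF e_m[OF u] B_borel[OF u]] sets_mu space_mu by simp
    moreover have "S u = (\<lambda>v. exp (f (u, v))) -` B u \<inter> space MV" using S_def by auto
    ultimately show ?thesis using sets_mu by simp
  qed
  have part1: "L_CNCE P MV k f S \<le> L_NCE P MV k f"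
    unfolding L_CNCE_def L_NCE_def
  proof (rule integral_mono_AE[OF int_CNCE int_NCE])
    show "AE x in P. (\<integral>vs. nce_score k f (fst x) (snd x) vs \<partial>q_neg P MV k S (fst x))
        \<le> (\<integral>vs. nce_score k f (fst x) (snd x) vs \<partial>Pi\<^sub>M {2..k} (\<lambda>_. marg_V P MV))"
      using int_NCE_inner int_CNCE_inner AE_space
    proof (eventually_elim)
      case (elim x)
      obtain u v1 where x: "x = (u, v1)" and u: "u \<in> space MU" and v1: "v1 \<in> space MV"
        using elim(3) spP by (cases x) auto
      have nf: "nce_score k f u v1 = (\<lambda>vs. (ln (real k) + f (u, v1)) - ln (exp (f (u, v1)) + (\<Sum>j\<in>{2..k}. (\<lambda>v. exp (f (u, v))) (vs j))))"
        by (rule ext, rule nce_alt[OF k])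
      show ?case
        unfolding x fst_conv snd_conv q_neg_def nf
        using elim(1,2) unfolding x fst_conv snd_conv q_neg_def nf \<mu>_def[symmetric]
        by (intro part1_point[OF mu e_m[OF u] _ c_fin[OF u, folded \<mu>_def] k _ S_sets[OF u] S_pos[OF u, folded \<mu>_def]])
           (auto simp: S_def B_lower[OF u, folded \<mu>_def])
    qed
  qed
  define MUd where "MUd = distr P MU fst"
  have MUdp: "prob_space MUd" unfolding MUd_def by (rule P.prob_space_distr) simp
  interpret Qp: pair_prob_space MUd \<mu>
    using MUdp mu by (simp add: pair_prob_space_def pair_sigma_finite_def prob_space_imp_sigma_finite)
  define Q where "Q = MUd \<Otimes>\<^sub>M \<mu>"
  have sets_Q: "sets Q = sets P"
    unfolding Q_def sets_P using sets_mu by (intro sets_pair_measure_cong) (simp_all add: MUd_def)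
  have Qsf: "sigma_finite_measure Q" unfolding Q_def by unfold_locales
  have JP: "distr P (MU \<Otimes>\<^sub>M MV) (\<lambda>x. (fst x, snd x)) = P"
    using distr_id2[of "MU \<Otimes>\<^sub>M MV" P] sets_P by simp
  have MI: "mutual_info MU MV P = (if absolutely_continuous Q P \<and> integrable P (entropy_density (exp 1) Q P)
       then ereal (KL_divergence (exp 1) Q P) else \<infinity>)"
    unfolding mutual_info_def Let_def prob_space.mutual_information_def[OF P] JP
    by (simp add: Q_def MUd_def \<mu>_def marg_V_def)
  have part2: "ereal (L_NCE P MV k f) \<le> mutual_info MU MV P"
  proof (cases "absolutely_continuous Q P \<and> integrable P (entropy_density (exp 1) Q P)")
    case False
    then show ?thesis unfolding MI by (subst if_not_P) auto
  next
    case True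
    then have ac: "absolutely_continuous Q P" and ient: "integrable P (entropy_density (exp 1) Q P)" by auto
    define D where "D = RN_deriv Q P"
    have Dm: "D \<in> borel_measurable P"
      unfolding D_def by (subst measurable_cong_sets[OF sets_Q[symmetric] refl]) simp
    have dens: "density Q D = P"
      unfolding D_def using sigma_finite_measure.density_RN_deriv[OF Qsf ac sets_Q[symmetric]] .
    have "AE x in Q. D x \<noteq> \<infinity>"
      unfolding D_def by (rule sigma_finite_measure.RN_deriv_finite[OF Qsf _ ac sets_Q[symmetric]])
        (simp add: P.sigma_finite_measure_axioms)
    then have "AE x in density Q D. 0 < D x \<and> D x \<noteq> \<infinity>"
      by (subst AE_density) (auto simp: D_def)
    then have AED: "AE x in P. 0 < enn2real (D x)"
      unfolding dens by eventually_elim (auto simp: enn2real_positive_iff less_top)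
    define d where "d x = enn2real (D x)" for x
    have ent: "entropy_density (exp 1) Q P x = ln (d x)" for x
      by (simp add: entropy_density_def d_def D_def log_def)
    have entf: "entropy_density (exp 1) Q P = (\<lambda>x. ln (d x))" by (rule ext) (rule ent)
    have KL: "KL_divergence (exp 1) Q P = (\<integral>x. ln (d x) \<partial>P)"
      unfolding KL_divergence_def entf ..
    have lnint: "integrable P (\<lambda>x. ln (d x))" using ient unfolding entf .
    define Y where "Y x vs = real k * exp (f x) / (exp (f x) + (\<Sum>j\<in>{2..k}. exp (f (fst x, vs j))))" for x vs
    define G where "G x = (\<integral>vs. Y x vs \<partial>NN)" for x
    have Ypos: "Y x vs > 0" for x vs unfolding Y_def
      using k by (intro divide_pos_pos mult_pos_pos add_pos_nonneg) (auto intro: sum_nonneg)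
    have Yb: "Y x vs \<le> real k" for x vs
    proof -
      have "exp (f x) \<le> exp (f x) + (\<Sum>j\<in>{2..k}. exp (f (fst x, vs j)))" by (auto intro: sum_nonneg)
      then show ?thesis unfolding Y_def
        by (simp add: divide_le_eq add_pos_nonneg sum_nonneg mult_left_mono)
    qed
    have compMV: "(\<lambda>vs. vs j) \<in> measurable NN MV" if "j \<in> {2..k}" for j
      using measurable_component_singleton[OF that, of "\<lambda>_. \<mu>"]
      unfolding NN_def by (subst measurable_cong_sets[OF refl sets_mu[symmetric]])
    have Bj: "(\<lambda>p. exp (f (fst (fst p), snd p j))) \<in> borel_measurable (P \<Otimes>\<^sub>M NN)" if "j \<in> {2..k}" for j
    proof -
      have "(\<lambda>p. (fst (fst p), snd p j)) \<in> measurable (P \<Otimes>\<^sub>M NN) (MU \<Otimes>\<^sub>M MV)"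
        by (rule measurable_Pair[OF measurable_compose[OF measurable_fst fst_m] measurable_compose[OF measurable_snd compMV[OF that]]])
      from measurable_compose[OF this f_meas] show ?thesis by measurable
    qed
    have A: "(\<lambda>p. exp (f (fst p))) \<in> borel_measurable (P \<Otimes>\<^sub>M NN)" by measurable
    have Bs: "(\<lambda>p. \<Sum>j\<in>{2..k}. exp (f (fst (fst p), snd p j))) \<in> borel_measurable (P \<Otimes>\<^sub>M NN)"
      using Bj by (rule borel_measurable_sum)
    have Ypm: "case_prod Y \<in> borel_measurable (P \<Otimes>\<^sub>M NN)"
    proof -
      have "case_prod Y = (\<lambda>p. real k * exp (f (fst p)) / (exp (f (fst p)) + (\<Sum>j\<in>{2..k}. exp (f (fst (fst p), snd p j)))))"
        by (auto simp: Y_def)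
      then show ?thesis using A Bs by simp
    qed
    have Ym: "Y x \<in> borel_measurable NN" if x: "x \<in> space P" for x
      using measurable_Pair2[OF Ypm x] by simp
    have NNsf: "sigma_finite_measure NN" by unfold_locales
    have Gm: "G \<in> borel_measurable P"
      unfolding G_def by (rule sigma_finite_measure.borel_measurable_lebesgue_integral[OF NNsf Ypm])
    have G0: "G x \<ge> 0" for x unfolding G_def using Ypos[of x] by (intro integral_nonneg_AE AE_I2) (auto intro: less_imp_le)
    have nceY: "nce_score k f (fst x) (snd x) = (\<lambda>vs. ln (Y x vs))" for x
      unfolding Y_def by (rule ext, subst nce_Y[OF k]) simp
    have pt: "AE x in P. (\<integral>vs. nce_score k f (fst x) (snd x) vs \<partial>PiM {2..k} (\<lambda>_. marg_V P MV)) - ln (d x) \<le> G x / d x - 1"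
      using int_NCE_inner AED AE_space
    proof eventually_elim
      case (elim x)
      show ?case using elim unfolding nceY \<mu>_def[symmetric] NN_def[symmetric] G_def d_def
        by (intro part2_point(2)[OF NNp Ym Ypos Yb]) auto
    qed
    define h where "h x = (\<integral>vs. nce_score k f (fst x) (snd x) vs \<partial>PiM {2..k} (\<lambda>_. marg_V P MV))" for x
    have dm: "d \<in> borel_measurable P" unfolding d_def using Dm by measurable
    have DmQ: "D \<in> borel_measurable Q" using Dm by (subst measurable_cong_sets[OF sets_Q refl])
    have GdmQ: "(\<lambda>x. ennreal (G x / d x)) \<in> borel_measurable Q"
      using Gm dm by (subst measurable_cong_sets[OF sets_Q refl]) measurable
    have GmQ: "(\<lambda>x. ennreal (G x)) \<in> borel_measurable Q"
      using Gm by (subst measurable_cong_sets[OF sets_Q refl]) measurable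
    have Q1: "(\<integral>\<^sup>+x. ennreal (G x) \<partial>Q) = 1"
    proof -
      have "(\<integral>\<^sup>+x. ennreal (G x) \<partial>Q) = (\<integral>\<^sup>+u. \<integral>\<^sup>+v1. ennreal (G (u, v1)) \<partial>\<mu> \<partial>MUd)"
        unfolding Q_def using GmQ unfolding Q_def by (rule mu.nn_integral_fst[symmetric])
      also have "\<dots> = (\<integral>\<^sup>+u. 1 \<partial>MUd)"
      proof (rule nn_integral_cong)
        fix u assume "u \<in> space MUd"
        then have u: "u \<in> space MU" by (simp add: MUd_def)
        have "(\<integral>\<^sup>+v1. ennreal (G (u, v1)) \<partial>\<mu>) = (\<integral>\<^sup>+v1. \<integral>\<^sup>+vs. ennreal (Y (u, v1) vs) \<partial>NN \<partial>\<mu>)"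
        proof (rule nn_integral_cong)
          fix v1 assume "v1 \<in> space \<mu>"
          then have x: "(u, v1) \<in> space P" using u spP space_mu by simp
          show "ennreal (G (u, v1)) = (\<integral>\<^sup>+vs. ennreal (Y (u, v1) vs) \<partial>NN)"
          proof -
            have "integrable NN (Y (u, v1))"
              using Ypos Yb Ym[OF x] by (intro NN.integrable_const_bound[where B="real k"]) (auto simp: abs_of_pos)
            then show ?thesis
              unfolding G_def using Ypos
              by (intro nn_integral_eq_integral[symmetric] AE_I2) (auto intro: less_imp_le)
          qed
        qed
        also have "\<dots> = 1"
          using sym_total[OF mu e_m[OF u] _ k] unfolding NN_def Y_def by simp
        finally show "(\<integral>\<^sup>+v1. ennreal (G (u, v1)) \<partial>\<mu>) = 1" .
      qed
      also have "\<dots> = 1" using prob_space.emeasure_space_1[OF MUdp] by simp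
      finally show ?thesis .
    qed
    have nnb: "(\<integral>\<^sup>+x. ennreal (G x / d x) \<partial>P) \<le> 1"
    proof -
      have "(\<integral>\<^sup>+x. ennreal (G x / d x) \<partial>P) = (\<integral>\<^sup>+x. ennreal (G x / d x) \<partial>density Q D)"
        using dens by simp
      also have "\<dots> = (\<integral>\<^sup>+x. D x * ennreal (G x / d x) \<partial>Q)"
        using DmQ GdmQ by (rule nn_integral_density)
      also have "\<dots> \<le> (\<integral>\<^sup>+x. ennreal (G x) \<partial>Q)"
      proof (rule nn_integral_mono)
        fix x
        show "D x * ennreal (G x / d x) \<le> ennreal (G x)"
        proof (cases "D x" rule: ennreal_cases)
          case (real r)
          show ?thesis
          proof (cases "r = 0")
            case True then show ?thesis using real by simp
          next
            case False
            then have "r > 0" using real by simp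
            then have "ennreal r * ennreal (G x / r) = ennreal (G x)"
              using G0[of x] by (simp add: ennreal_mult''[symmetric])
            then show ?thesis using real by (simp add: d_def)
          qed
        next
          case top then show ?thesis by (simp add: d_def)
        qed
      qed
      finally show ?thesis using Q1 by simp
    qed
    have Gdint: "integrable P (\<lambda>x. G x / d x)"
    proof (rule integrableI_nonneg)
      show "(\<lambda>x. G x / d x) \<in> borel_measurable P" using Gm dm by measurable
      show "AE x in P. 0 \<le> G x / d x" using G0 by (intro AE_I2 divide_nonneg_nonneg) (auto simp: d_def)
      show "(\<integral>\<^sup>+x. ennreal (G x / d x) \<partial>P) < \<infinity>" using nnb by (simp add: le_less_trans)
    qed
    have "(\<integral>x. G x / d x \<partial>P) \<le> 1"
    proof -
      have "ennreal (\<integral>x. G x / d x \<partial>P) = (\<integral>\<^sup>+x. ennreal (G x / d x) \<partial>P)"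
        using Gdint G0 by (intro nn_integral_eq_integral[symmetric]) (auto simp: d_def)
      with nnb have "ennreal (\<integral>x. G x / d x \<partial>P) \<le> 1" by simp
      then show ?thesis by (simp only: ennreal_le_1)
    qed
    moreover have "(\<integral>x. h x - ln (d x) \<partial>P) \<le> (\<integral>x. G x / d x - 1 \<partial>P)"
      using pt int_NCE lnint Gdint unfolding h_def by (intro integral_mono_AE) auto
    ultimately have "(\<integral>x. h x \<partial>P) \<le> (\<integral>x. ln (d x) \<partial>P)"
      using int_NCE lnint Gdint unfolding h_def
      by (simp add: Bochner_Integration.integral_diff P.prob_space)
    then show ?thesis unfolding MI using True KL by (simp add: L_NCE_def h_def)
  qed
  show ?thesis using part1 part2 by simp
qed

end
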